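(* Let $\mathcal G=(V_{\min},V_{\max},E,w,\lambda)$ be an improving discounted payoff game, $\sigma$ a joint strategy, and $\nu$ a basis valuation of $H$ minimising $f_\sigma$ over all solutions of $H$, with $f_\sigma(\nu)\neq0$. Assume there are no local improvements of $\sigma$ for $\nu$, i.e. $\mathsf{offset}(\nu,(v,v'))\ge\mathsf{offset}(\nu,(v,\sigma(v)))$ for all $(v,v')\in E$. Let $E'$ be a given set of edges with $E_\nu\subseteq E'\subseteq S^\sigma_\nu$ containing an outgoing edge of every vertex. Then there exist a neighbouring valuation $\nu''$ of $\nu$ and a joint strategy $\sigma'$ with $f_{\sigma'}(\nu'')<f_\sigma(\nu)$; such a $\sigma'$ is better than $\sigma$, and it can be chosen such that $(v,\sigma'(v))\in E'$ for all $v\in V$.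
   Context: A discounted payoff game is a tuple $\mathcal G=(V_{\min},V_{\max},E,w,\lambda)$ with $V=V_{\min}\cup V_{\max}$ finite (disjoint union of Min and Max vertices), $E\subseteq V\times V$ with every vertex having an outgoing edge, $w:E\to\mathbb R$, $\lambda:E\to[0,1)$. A joint strategy is a map $\sigma:V\to V$ with $(v,\sigma(v))\in E$ for all $v$. $H$ is the system of inequations over $x\in\mathbb R^V$ containing, for each edge $e=(v,v')$, $I_e$: $x(v)\ge w_e+\lambda_e x(v')$ if $v\in V_{\max}$ and $x(v)\le w_e+\lambda_e x(v')$ if $v\in V_{\min}$. A basis of $H$ is a set of $|V|$ inequations of $H$ whose equality versions have a unique common solution; if that solution satisfies $H$ it is the basis valuation of that basis. $\mathsf{offset}(x,(v,v'))=x(v)-(w_{(v,v')}+\lambda_{(v,v')}x(v'))$ if $v\in V_{\max}$, and $(w_{(v,v')}+\lambda_{(v,v')}x(v'))-x(v)$ otherwise; $f_\sigma(x)=\sum_{v\in V}\mathsf{offset}(x,(v,\sigma(v)))$. $S^\sigma_\nu=\{(v,v')\in E\mid \mathsf{offset}(\nu,(v,v'))=\mathsf{offset}(\nu,(v,\sigma(v)))\}$ and $E_\nu=\{(v,v')\in E\mid\mathsf{offset}(\nu,(v,v'))=0\}$. A joint strategy $\sigma'$ is better than $\sigma$ iff $\min\{f_{\sigma'}(x)\mid x\text{ solves }H\}<\min\{f_{\sigma}(x)\mid x\text{ solves }H\}$. The game is sharp if every basis valuation satisfies exactly $|V|$ inequations of $H$ with equality (so it is the valuation of a unique basis). A sharp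 game is improving if for every joint strategy $\sigma$ and every basis valuation $\nu$ that does not minimise $f_\sigma$ over the solutions of $H$, there is a basis obtained from the basis of $\nu$ by exchanging exactly one inequation whose basis valuation $\nu'$ satisfies $f_\sigma(\nu')<f_\sigma(\nu)$. A neighbouring valuation of $\nu$ is a basis valuation of a basis obtained from the basis of $\nu$ by exchanging exactly one inequation. *)

theory Defs
  imports Complex_Main
begin

(* Vertices: the finite type 'v (V = UNIV). V_max = Vmax, V_min = UNIV - Vmax.
   Edges are pairs; w and lam are weight and discount of an edge. *)

definition discounted_game :: "('v::finite) set \<Rightarrow> ('v \<times> 'v) set \<Rightarrow> ('v \<times> 'v \<Rightarrow> real) \<Rightarrow> bool" where
  "discounted_game Vmax E lam \<longleftrightarrow>
     (\<forall>v. \<exists>v'. (v, v') \<in> E) \<and> (\<forall>e\<in>E. 0 \<le> lam e \<and> lam e < 1)"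

definition ineq :: "'v set \<Rightarrow> ('v \<times> 'v \<Rightarrow> real) \<Rightarrow> ('v \<times> 'v \<Rightarrow> real) \<Rightarrow> 'v \<times> 'v \<Rightarrow> ('v \<Rightarrow> real) \<Rightarrow> bool" where
  "ineq Vmax w lam e x \<longleftrightarrow>
     (if fst e \<in> Vmax then x (fst e) \<ge> w e + lam e * x (snd e)
      else x (fst e) \<le> w e + lam e * x (snd e))"

definition eqn :: "('v \<times> 'v \<Rightarrow> real) \<Rightarrow> ('v \<times> 'v \<Rightarrow> real) \<Rightarrow> 'v \<times> 'v \<Rightarrow> ('v \<Rightarrow> real) \<Rightarrow> bool" where
  "eqn w lam e x \<longleftrightarrow> x (fst e) = w e + lam e * x (snd e)"

definition solves_H :: "'v set \<Rightarrow> ('v \<times> 'v) set \<Rightarrow> ('v \<times> 'v \<Rightarrow> real) \<Rightarrow> ('v \<times> 'v \<Rightarrow> real) \<Rightarrow> ('v \<Rightarrow> real) \<Rightarrow> bool" where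
  "solves_H Vmax E w lam x \<longleftrightarrow> (\<forall>e\<in>E. ineq Vmax w lam e x)"

(* B (a set of inequations of H, indexed by edges) is a basis *)
definition is_basis :: "('v::finite \<times> 'v) set \<Rightarrow> ('v \<times> 'v \<Rightarrow> real) \<Rightarrow> ('v \<times> 'v \<Rightarrow> real) \<Rightarrow> ('v \<times> 'v) set \<Rightarrow> bool" where
  "is_basis E w lam B \<longleftrightarrow> B \<subseteq> E \<and> card B = card (UNIV :: 'v set) \<and>
     (\<exists>!x. \<forall>e\<in>B. eqn w lam e x)"

definition basis_valuation :: "'v::finite set \<Rightarrow> ('v \<times> 'v) set \<Rightarrow> ('v \<times> 'v \<Rightarrow> real) \<Rightarrow> ('v \<times> 'v \<Rightarrow> real) \<Rightarrow> ('v \<times> 'v) set \<Rightarrow> ('v \<Rightarrow> real) \<Rightarrow> bool" where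
  "basis_valuation Vmax E w lam B nu \<longleftrightarrow> is_basis E w lam B \<and>
     (\<forall>e\<in>B. eqn w lam e nu) \<and> solves_H Vmax E w lam nu"

definition is_basis_valuation :: "'v::finite set \<Rightarrow> ('v \<times> 'v) set \<Rightarrow> ('v \<times> 'v \<Rightarrow> real) \<Rightarrow> ('v \<times> 'v \<Rightarrow> real) \<Rightarrow> ('v \<Rightarrow> real) \<Rightarrow> bool" where
  "is_basis_valuation Vmax E w lam nu \<longleftrightarrow> (\<exists>B. basis_valuation Vmax E w lam B nu)"

definition offset :: "'v set \<Rightarrow> ('v \<times> 'v \<Rightarrow> real) \<Rightarrow> ('v \<times> 'v \<Rightarrow> real) \<Rightarrow> ('v \<Rightarrow> real) \<Rightarrow> 'v \<times> 'v \<Rightarrow> real" where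
  "offset Vmax w lam x e =
     (if fst e \<in> Vmax then x (fst e) - (w e + lam e * x (snd e))
      else (w e + lam e * x (snd e)) - x (fst e))"

definition joint_strategy :: "('v \<times> 'v) set \<Rightarrow> ('v \<Rightarrow> 'v) \<Rightarrow> bool" where
  "joint_strategy E \<sigma> \<longleftrightarrow> (\<forall>v. (v, \<sigma> v) \<in> E)"

definition f_strat :: "'v::finite set \<Rightarrow> ('v \<times> 'v \<Rightarrow> real) \<Rightarrow> ('v \<times> 'v \<Rightarrow> real) \<Rightarrow> ('v \<Rightarrow> 'v) \<Rightarrow> ('v \<Rightarrow> real) \<Rightarrow> real" where
  "f_strat Vmax w lam \<sigma> x = (\<Sum>v\<in>UNIV. offset Vmax w lam x (v, \<sigma> v))"

definition S_set :: "'v set \<Rightarrow> ('v \<times> 'v) set \<Rightarrow> ('v \<times> 'v \<Rightarrow> real) \<Rightarrow> ('v \<times> 'v \<Rightarrow> real) \<Rightarrow> ('v \<Rightarrow> 'v) \<Rightarrow> ('v \<Rightarrow> real) \<Rightarrow> ('v \<times> 'v) set" where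
  "S_set Vmax E w lam \<sigma> nu =
     {e \<in> E. offset Vmax w lam nu e = offset Vmax w lam nu (fst e, \<sigma> (fst e))}"

definition E_tight :: "'v set \<Rightarrow> ('v \<times> 'v) set \<Rightarrow> ('v \<times> 'v \<Rightarrow> real) \<Rightarrow> ('v \<times> 'v \<Rightarrow> real) \<Rightarrow> ('v \<Rightarrow> real) \<Rightarrow> ('v \<times> 'v) set" where
  "E_tight Vmax E w lam nu = {e \<in> E. offset Vmax w lam nu e = 0}"

definition min_f :: "'v::finite set \<Rightarrow> ('v \<times> 'v) set \<Rightarrow> ('v \<times> 'v \<Rightarrow> real) \<Rightarrow> ('v \<times> 'v \<Rightarrow> real) \<Rightarrow> ('v \<Rightarrow> 'v) \<Rightarrow> real" where
  "min_f Vmax E w lam \<sigma> = Inf (f_strat Vmax w lam \<sigma> ` {x. solves_H Vmax E w lam x})"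

definition better :: "'v::finite set \<Rightarrow> ('v \<times> 'v) set \<Rightarrow> ('v \<times> 'v \<Rightarrow> real) \<Rightarrow> ('v \<times> 'v \<Rightarrow> real) \<Rightarrow> ('v \<Rightarrow> 'v) \<Rightarrow> ('v \<Rightarrow> 'v) \<Rightarrow> bool" where
  "better Vmax E w lam \<sigma>' \<sigma> \<longleftrightarrow> min_f Vmax E w lam \<sigma>' < min_f Vmax E w lam \<sigma>"

definition minimises :: "'v::finite set \<Rightarrow> ('v \<times> 'v) set \<Rightarrow> ('v \<times> 'v \<Rightarrow> real) \<Rightarrow> ('v \<times> 'v \<Rightarrow> real) \<Rightarrow> ('v \<Rightarrow> 'v) \<Rightarrow> ('v \<Rightarrow> real) \<Rightarrow> bool" where
  "minimises Vmax E w lam \<sigma> nu \<longleftrightarrow> solves_H Vmax E w lam nu \<and>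
     (\<forall>x. solves_H Vmax E w lam x \<longrightarrow> f_strat Vmax w lam \<sigma> nu \<le> f_strat Vmax w lam \<sigma> x)"

definition sharp :: "'v::finite set \<Rightarrow> ('v \<times> 'v) set \<Rightarrow> ('v \<times> 'v \<Rightarrow> real) \<Rightarrow> ('v \<times> 'v \<Rightarrow> real) \<Rightarrow> bool" where
  "sharp Vmax E w lam \<longleftrightarrow> (\<forall>nu. is_basis_valuation Vmax E w lam nu \<longrightarrow>
      card {e \<in> E. eqn w lam e nu} = card (UNIV :: 'v set))"

definition exchange :: "('v \<times> 'v) set \<Rightarrow> ('v \<times> 'v) set \<Rightarrow> ('v \<times> 'v) set \<Rightarrow> bool" where
  "exchange E B B' \<longleftrightarrow> (\<exists>e_out e_in. e_out \<in> B \<and> e_in \<in> E - B \<and> B' = insert e_in (B - {e_out}))"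

definition neighbouring :: "'v::finite set \<Rightarrow> ('v \<times> 'v) set \<Rightarrow> ('v \<times> 'v \<Rightarrow> real) \<Rightarrow> ('v \<times> 'v \<Rightarrow> real) \<Rightarrow> ('v \<Rightarrow> real) \<Rightarrow> ('v \<Rightarrow> real) \<Rightarrow> bool" where
  "neighbouring Vmax E w lam nu nu' \<longleftrightarrow> (\<exists>B B'. basis_valuation Vmax E w lam B nu \<and>
      exchange E B B' \<and> basis_valuation Vmax E w lam B' nu')"

definition improving :: "'v::finite set \<Rightarrow> ('v \<times> 'v) set \<Rightarrow> ('v \<times> 'v \<Rightarrow> real) \<Rightarrow> ('v \<times> 'v \<Rightarrow> real) \<Rightarrow> bool" where
  "improving Vmax E w lam \<longleftrightarrow> sharp Vmax E w lam \<and>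
     (\<forall>\<sigma> nu B. joint_strategy E \<sigma> \<longrightarrow> basis_valuation Vmax E w lam B nu \<longrightarrow>
        \<not> minimises Vmax E w lam \<sigma> nu \<longrightarrow>
        (\<exists>B' nu'. exchange E B B' \<and> basis_valuation Vmax E w lam B' nu' \<and>
                  f_strat Vmax w lam \<sigma> nu' < f_strat Vmax w lam \<sigma> nu))"

end

theory Submission
  imports Defs
begin


lemma contr_fix:
  fixes F :: "('v::finite \<Rightarrow> real) \<Rightarrow> 'v \<Rightarrow> real"
  assumes q: "0 \<le> q" "q < 1"
    and contr: "\<And>x y D v. (\<forall>u. \<bar>x u - y u\<bar> \<le> D) \<Longrightarrow> \<bar>F x v - F y v\<bar> \<le> q * D"
  shows "\<exists>x. F x = x"
proof -
  define xs where "xs n = (F ^^ n) (\<lambda>_. 0)" for n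
  have xsS: "xs (Suc n) = F (xs n)" for n by (simp add: xs_def)
  define D0 where "D0 = (\<Sum>u\<in>UNIV. \<bar>xs 1 u - xs 0 u\<bar>)"
  have step: "\<forall>u. \<bar>xs (Suc n) u - xs n u\<bar> \<le> q ^ n * D0" for n
  proof (induction n)
    case 0
    show ?case unfolding D0_def
      by (auto intro!: member_le_sum[where f="\<lambda>u. \<bar>xs 1 u - xs 0 u\<bar>", simplified])
  next
    case (Suc n)
    show ?case
    proof
      fix u
      have "\<bar>F (xs (Suc n)) u - F (xs n) u\<bar> \<le> q * (q ^ n * D0)"
        by (rule contr) (use Suc in auto)
      then show "\<bar>xs (Suc (Suc n)) u - xs (Suc n) u\<bar> \<le> q ^ Suc n * D0"
        by (simp add: xsS)
    qed
  qed
  have D0: "0 \<le> D0" unfolding D0_def by (intro sum_nonneg) auto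
  define L where "L u = xs 0 u + (\<Sum>n. xs (Suc n) u - xs n u)" for u
  have conv: "(\<lambda>n. xs n u) \<longlonglongrightarrow> L u" for u
  proof -
    have sg: "summable (\<lambda>n. D0 * q ^ n)"
      using q by (intro summable_mult summable_geometric) auto
    have "summable (\<lambda>n. xs (Suc n) u - xs n u)"
      by (rule summable_comparison_test'[OF sg, of 0]) (use step in \<open>auto simp: mult.commute\<close>)
    then have "(\<lambda>n. \<Sum>i<n. xs (Suc i) u - xs i u) \<longlonglongrightarrow> (\<Sum>n. xs (Suc n) u - xs n u)"
      by (rule summable_LIMSEQ)
    moreover have "(\<Sum>i<n. xs (Suc i) u - xs i u) = xs n u - xs 0 u" for n
      by (rule sum_lessThan_telescope)
    ultimately have "(\<lambda>n. xs 0 u + (xs n u - xs 0 u)) \<longlonglongrightarrow> L u"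
      unfolding L_def by (intro tendsto_add) auto
    then show ?thesis by simp
  qed
  define Dn where "Dn n = (\<Sum>u\<in>UNIV. \<bar>xs n u - L u\<bar>)" for n
  have Dn0: "Dn \<longlonglongrightarrow> 0"
  proof -
    have "(\<lambda>n. \<Sum>u\<in>UNIV. \<bar>xs n u - L u\<bar>) \<longlonglongrightarrow> (\<Sum>u\<in>(UNIV::'v set). \<bar>L u - L u\<bar>)"
      by (intro tendsto_sum tendsto_rabs tendsto_diff conv tendsto_const)
    then show ?thesis unfolding Dn_def by simp
  qed
  have "F L v = L v" for v
  proof -
    have b: "\<bar>F (xs n) v - F L v\<bar> \<le> q * Dn n" for n
      by (rule contr) (auto simp: Dn_def intro!: member_le_sum[where f="\<lambda>u. \<bar>xs n u - L u\<bar>", simplified])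
    have lo: "(\<lambda>n. F L v - q * Dn n) \<longlonglongrightarrow> F L v - q * 0"
      by (intro tendsto_intros Dn0)
    have hi: "(\<lambda>n. F L v + q * Dn n) \<longlonglongrightarrow> F L v + q * 0"
      by (intro tendsto_intros Dn0)
    have "(\<lambda>n. F (xs n) v) \<longlonglongrightarrow> F L v"
      apply (rule tendsto_sandwich[OF _ _ lo[simplified] hi[simplified]])
      using b by (auto simp: abs_le_iff algebra_simps)
    moreover have "(\<lambda>n. F (xs n) v) \<longlonglongrightarrow> L v"
      using LIMSEQ_Suc[OF conv[of v]] by (simp add: xsS)
    ultimately show ?thesis using LIMSEQ_unique by blast
  qed
  then show ?thesis by blast
qed

lemma Max_lip:
  fixes f g :: "'a \<Rightarrow> real"
  assumes "finite A" "A \<noteq> {}" "\<forall>a\<in>A. \<bar>f a - g a\<bar> \<le> D"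
  shows "\<bar>Max (f ` A) - Max (g ` A)\<bar> \<le> D"
proof -
  have "Max (f ` A) \<in> f ` A" using assms by (intro Max_in) auto
  then obtain a where a: "a \<in> A" "Max (f ` A) = f a" by auto
  have "Max (g ` A) \<in> g ` A" using assms by (intro Max_in) auto
  then obtain b where b: "b \<in> A" "Max (g ` A) = g b" by auto
  have h1: "g a \<le> Max (g ` A)" using a(1) assms(1) by (intro Max_ge) auto
  have h2: "f b \<le> Max (f ` A)" using b(1) assms(1) by (intro Max_ge) auto
  have h3: "\<bar>f a - g a\<bar> \<le> D" "\<bar>f b - g b\<bar> \<le> D" using a b assms(3) by auto
  show ?thesis using a(2) b(2) h1 h2 h3 by (simp add: abs_le_iff)
qed

lemma Min_lip:
  fixes f g :: "'a \<Rightarrow> real"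
  assumes "finite A" "A \<noteq> {}" "\<forall>a\<in>A. \<bar>f a - g a\<bar> \<le> D"
  shows "\<bar>Min (f ` A) - Min (g ` A)\<bar> \<le> D"
proof -
  have "Min (f ` A) \<in> f ` A" using assms by (intro Min_in) auto
  then obtain a where a: "a \<in> A" "Min (f ` A) = f a" by auto
  have "Min (g ` A) \<in> g ` A" using assms by (intro Min_in) auto
  then obtain b where b: "b \<in> A" "Min (g ` A) = g b" by auto
  have h1: "g a \<ge> Min (g ` A)" using a(1) assms(1) by (intro Min_le) auto
  have h2: "f b \<ge> Min (f ` A)" using b(1) assms(1) by (intro Min_le) auto
  have h3: "\<bar>f a - g a\<bar> \<le> D" "\<bar>f b - g b\<bar> \<le> D" using a b assms(3) by auto
  show ?thesis using a(2) b(2) h1 h2 h3 by (simp add: abs_le_iff)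
qed

lemma offset_nonneg_iff: "0 \<le> offset Vmax w lam x e \<longleftrightarrow> ineq Vmax w lam e x"
  unfolding offset_def ineq_def by auto

lemma offset_affine:
  "offset Vmax w lam (\<lambda>u. (1 - t) * a u + t * b u) e = (1 - t) * offset Vmax w lam a e + t * offset Vmax w lam b e"
  unfolding offset_def by (auto simp: algebra_simps)

lemma f_nonneg: "solves_H Vmax E w lam x \<Longrightarrow> joint_strategy E \<sigma> \<Longrightarrow> 0 \<le> f_strat Vmax w lam \<sigma> x"
  unfolding f_strat_def solves_H_def joint_strategy_def
  by (intro sum_nonneg) (auto simp: offset_nonneg_iff)



theorem theorem4p4:
  fixes Vmax :: "'v::finite set" and E :: "('v \<times> 'v) set"
    and w lam :: "'v \<times> 'v \<Rightarrow> real"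
    and \<sigma> :: "'v \<Rightarrow> 'v" and nu :: "'v \<Rightarrow> real" and E' :: "('v \<times> 'v) set"
  assumes game: "discounted_game Vmax E lam"
    and impr: "improving Vmax E w lam"
    and strat: "joint_strategy E \<sigma>"
    and bv: "is_basis_valuation Vmax E w lam nu"
    and mini: "minimises Vmax E w lam \<sigma> nu"
    and nonzero: "f_strat Vmax w lam \<sigma> nu \<noteq> 0"
    and no_local: "\<forall>e\<in>E. offset Vmax w lam nu e \<ge> offset Vmax w lam nu (fst e, \<sigma> (fst e))"
    and E'_lower: "E_tight Vmax E w lam nu \<subseteq> E'"
    and E'_upper: "E' \<subseteq> S_set Vmax E w lam \<sigma> nu"
    and E'_out: "\<forall>v. \<exists>v'. (v, v') \<in> E'"
  shows "(\<exists>nu'' \<sigma>'. neighbouring Vmax E w lam nu nu'' \<and> joint_strategy E \<sigma>' \<and>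
            f_strat Vmax w lam \<sigma>' nu'' < f_strat Vmax w lam \<sigma> nu \<and>
            (\<forall>v. (v, \<sigma>' v) \<in> E'))
       \<and> (\<forall>nu'' \<sigma>'. neighbouring Vmax E w lam nu nu'' \<and> joint_strategy E \<sigma>' \<and>
            f_strat Vmax w lam \<sigma>' nu'' < f_strat Vmax w lam \<sigma> nu
            \<longrightarrow> better Vmax E w lam \<sigma>' \<sigma>)"
  proof -
  let ?off = "offset Vmax w lam"
  let ?f = "f_strat Vmax w lam"
  have E'E: "E' \<subseteq> E" using E'_upper unfolding S_set_def by auto
  have solnu: "solves_H Vmax E w lam nu" using mini unfolding minimises_def by auto
  have offnu: "\<And>e. e \<in> E \<Longrightarrow> 0 \<le> ?off nu e"
    using solnu unfolding solves_H_def by (auto simp: offset_nonneg_iff)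
  have lam0: "\<And>e. e \<in> E \<Longrightarrow> 0 \<le> lam e" and lam1: "\<And>e. e \<in> E \<Longrightarrow> lam e < 1"
    using game unfolding discounted_game_def by auto
  have finE: "finite E" by (rule finite_subset[of _ UNIV]) auto
  define q where "q = Max (insert 0 (lam ` E))"
  have q0: "0 \<le> q" unfolding q_def using finE by auto
  have q1: "q < 1"
  proof -
    have "q \<in> insert 0 (lam ` E)" unfolding q_def using finE by (intro Max_in) auto
    then show ?thesis using lam1 by auto
  qed
  have lamq: "\<And>e. e \<in> E \<Longrightarrow> lam e \<le> q" unfolding q_def using finE by auto
  define Ev where "Ev v = {e \<in> E'. fst e = v}" for v
  have finEv: "finite (Ev v)" for v by (rule finite_subset[of _ UNIV]) auto
  have neEv: "Ev v \<noteq> {}" for v using E'_out unfolding Ev_def by fastforce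
  define g where "g x e = w e + lam e * x (snd e)" for x e
  define T where "T x v = (if v \<in> Vmax then Max (g x ` Ev v) else Min (g x ` Ev v))" for x v
  have contr: "\<bar>T x v - T y v\<bar> \<le> q * D" if "\<forall>u. \<bar>x u - y u\<bar> \<le> D" for x y D v
  proof -
    have "\<forall>e\<in>Ev v. \<bar>g x e - g y e\<bar> \<le> q * D"
    proof
      fix e assume "e \<in> Ev v"
      then have eE: "e \<in> E" using E'E unfolding Ev_def by auto
      have "\<bar>g x e - g y e\<bar> = lam e * \<bar>x (snd e) - y (snd e)\<bar>"
        unfolding g_def using lam0[OF eE] by (simp add: abs_mult right_diff_distrib[symmetric])
      also have "\<dots> \<le> q * D"
        using that lam0[OF eE] lamq[OF eE] q0 by (intro mult_mono) auto
      finally show "\<bar>g x e - g y e\<bar> \<le> q * D" .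
    qed
    then show ?thesis unfolding T_def using finEv neEv by (auto intro: Max_lip Min_lip)
  qed
  obtain ys where ys: "T ys = ys" using contr_fix[of q T, OF q0 q1 contr] by blast
  have "\<forall>v. \<exists>v'. (v, v') \<in> E' \<and> g ys (v, v') = T ys v"
  proof
    fix v
    have "T ys v \<in> g ys ` Ev v" unfolding T_def using finEv neEv by (auto intro: Max_in Min_in)
    then show "\<exists>v'. (v, v') \<in> E' \<and> g ys (v, v') = T ys v" unfolding Ev_def by force
  qed
  then obtain \<tau> where tau: "\<And>v. (v, \<tau> v) \<in> E'" "\<And>v. g ys (v, \<tau> v) = T ys v"
    by metis
  have offtau: "?off ys (v, \<tau> v) = 0" for v
    using tau(2)[of v] ys unfolding offset_def g_def by (metis (no_types, lifting) diff_self fst_conv snd_conv)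
  have offE': "0 \<le> ?off ys e" if "e \<in> E'" for e
  proof -
    obtain v v' where e: "e = (v, v')" by fastforce
    have "e \<in> Ev v" using that e unfolding Ev_def by auto
    then have "g ys e \<le> Max (g ys ` Ev v)" "Min (g ys ` Ev v) \<le> g ys e"
      using finEv by auto
    then show ?thesis using ys e unfolding offset_def T_def g_def
      by (auto dest: fun_cong[of _ _ v])
  qed
  have jt: "joint_strategy E \<tau>" using tau(1) E'E unfolding joint_strategy_def by auto
  define c where "c = ?f \<sigma> nu"
  have c: "0 < c" using f_nonneg[OF solnu strat] nonzero unfolding c_def by auto
  have eqo: "?off nu (v, \<tau> v) = ?off nu (v, \<sigma> v)" for v
  proof -
    have "(v, \<tau> v) \<in> S_set Vmax E w lam \<sigma> nu" using tau(1)[of v] E'_upper by blast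
    then show ?thesis unfolding S_set_def by simp
  qed
  have ftaunu: "?f \<tau> nu = c" unfolding c_def f_strat_def using eqo by simp
  have ftauys: "?f \<tau> ys = 0" unfolding f_strat_def using offtau by simp
  have ev: "\<forall>\<^sub>F t in at_right (0::real). \<forall>e\<in>E. 0 \<le> (1 - t) * ?off nu e + t * ?off ys e"
  proof (rule eventually_ball_finite[OF finE], rule ballI)
    fix e assume eE: "e \<in> E"
    show "\<forall>\<^sub>F t in at_right (0::real). 0 \<le> (1 - t) * ?off nu e + t * ?off ys e"
    proof (cases "?off nu e = 0")
      case True
      then have "e \<in> E'" using E'_lower eE unfolding E_tight_def by auto
      then have "0 \<le> ?off ys e" by (rule offE')
      then show ?thesis using True unfolding eventually_at_right_field
        by (intro exI[of _ 1]) auto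
    next
      case False
      define a where "a = ?off nu e"
      define b where "b = ?off ys e"
      have a: "0 < a" using False offnu[OF eE] unfolding a_def by auto
      have "\<forall>t>0. t < a / (a + \<bar>b\<bar>) \<longrightarrow> 0 \<le> (1 - t) * a + t * b"
      proof (intro allI impI)
        fix t :: real assume t: "0 < t" "t < a / (a + \<bar>b\<bar>)"
        have "t * (a + \<bar>b\<bar>) < a" using t a by (simp add: pos_less_divide_eq add_pos_nonneg)
        moreover have "- (t * \<bar>b\<bar>) \<le> t * b"
        proof -
          have "- \<bar>b\<bar> \<le> b" by simp
          from mult_left_mono[OF this, of t] t show ?thesis by simp
        qed
        ultimately show "0 \<le> (1 - t) * a + t * b" by (simp add: algebra_simps)
      qed
      then show ?thesis unfolding eventually_at_right_field a_def b_def
        using a by (intro exI[of _ "a / (a + \<bar>b\<bar>)"]) (auto simp: a_def b_def add_pos_nonneg)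
    qed
  qed
  then obtain bnd :: real where bnd: "bnd > 0"
    "\<And>t. t > 0 \<Longrightarrow> t < bnd \<Longrightarrow> \<forall>e\<in>E. 0 \<le> (1 - t) * ?off nu e + t * ?off ys e"
    unfolding eventually_at_right_field by auto
  define t where "t = bnd / 2"
  have t: "0 < t" "\<forall>e\<in>E. 0 \<le> (1 - t) * ?off nu e + t * ?off ys e"
  proof -
    show "0 < t" using bnd(1) unfolding t_def by simp
    have "t < bnd" using bnd(1) unfolding t_def by simp
    then show "\<forall>e\<in>E. 0 \<le> (1 - t) * ?off nu e + t * ?off ys e"
      using bnd(2)[of t] \<open>0 < t\<close> by blast
  qed
  define z where "z u = (1 - t) * nu u + t * ys u" for u
  have solz: "solves_H Vmax E w lam z"
    unfolding solves_H_def z_def using t(2) by (auto simp: offset_affine offset_nonneg_iff[symmetric])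
  have "?f \<tau> z = (1 - t) * ?f \<tau> nu + t * ?f \<tau> ys"
    unfolding f_strat_def z_def offset_affine by (simp add: sum.distrib sum_distrib_left)
  then have fz: "?f \<tau> z < c" using ftaunu ftauys t(1) c by simp
  have nmin: "\<not> minimises Vmax E w lam \<tau> nu"
    using solz fz ftaunu unfolding minimises_def by auto
  obtain B where B: "basis_valuation Vmax E w lam B nu" using bv unfolding is_basis_valuation_def by auto
  obtain B' nu' where nu': "exchange E B B'" "basis_valuation Vmax E w lam B' nu'" "?f \<tau> nu' < ?f \<tau> nu"
    using impr jt B nmin unfolding improving_def by blast
  have part1: "\<exists>nu'' \<sigma>'. neighbouring Vmax E w lam nu nu'' \<and> joint_strategy E \<sigma>' \<and>
            ?f \<sigma>' nu'' < ?f \<sigma> nu \<and> (\<forall>v. (v, \<sigma>' v) \<in> E')"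
  proof -
    have "neighbouring Vmax E w lam nu nu'" unfolding neighbouring_def using B nu'(1,2) by blast
    moreover have "?f \<tau> nu' < ?f \<sigma> nu" using nu'(3) ftaunu unfolding c_def by simp
    ultimately show ?thesis using jt tau(1) by blast
  qed
  have part2: "better Vmax E w lam \<sigma>' \<sigma>"
    if h: "neighbouring Vmax E w lam nu nu''" "joint_strategy E \<sigma>'" "?f \<sigma>' nu'' < ?f \<sigma> nu" for nu'' \<sigma>'
  proof -
    have sol'': "solves_H Vmax E w lam nu''" using h(1) unfolding neighbouring_def basis_valuation_def by auto
    have m1: "min_f Vmax E w lam \<sigma> = ?f \<sigma> nu" unfolding min_f_def
      using mini solnu unfolding minimises_def by (intro cInf_eq_minimum) auto
    have "bdd_below (?f \<sigma>' ` {x. solves_H Vmax E w lam x})"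
      using f_nonneg[OF _ h(2)] by (intro bdd_belowI[of _ 0]) auto
    then have m2: "min_f Vmax E w lam \<sigma>' \<le> ?f \<sigma>' nu''" unfolding min_f_def
      using sol'' by (intro cInf_lower) auto
    show ?thesis unfolding better_def using m1 m2 h(3) by linarith
  qed
  show ?thesis using part1 part2 by blast
qed

end
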